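(* If $V=\langle v_1,\dots,v_\ell\rangle$ is a sequence of moves that can be applied (successively) to the distribution $\mu$, then $V\mu\preceq\bar V\mu$, where $\bar V=\langle\bar v_1,\dots,\bar v_\ell\rangle$ is the sequence of extreme moves on the same intervals.
   Context: A distribution is a finite set $\{(x_1,m_1),\dots,(x_k,m_k)\}$, $m_i>0$; $\mu(A)=\sum_{x_i\in A}m_i$; $M_j[\mu]=\sum_im_ix_i^j$. A move $v=([a,b],\delta)$ has $\delta$ a signed distribution on $[a,b]$ with $M_0[\delta]=M_1[\delta]=0$; it applies to $\mu$ if $\mu+\delta$ is a distribution, and $v\mu=\mu+\delta$; $V\mu$ denotes the result of applying $v_1,\dots,v_\ell$ in order. The extreme move $\bar v$ on $[a,b]$ maps any distribution $\mu$ to the distribution $\mu'$ with $\mu'\{a<x<b\}=0$, $\mu'(\{x\})=\mu(\{x\})$ for $x\notin[a,b]$, $M_0[\mu']=M_0[\mu]$, $M_1[\mu']=M_1[\mu]$. $\mu'$ is a basic split of $\mu$ if obtained by replacing one point mass $(x_i,m_i)$ by finitely many point masses of total mass $m_i$ and center of mass $x_i$; $\mu\preceq\mu'$ if $\mu'$ is obtained from $\mu$ by zero or more basic splits. *)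

theory Defs
  imports Complex_Main
begin

text \<open>A (signed) distribution is represented as a finitely supported function
  real => real assigning to each point its mass.\<close>

type_synonym sdist = "real \<Rightarrow> real"

definition supp :: "sdist \<Rightarrow> real set" where
  "supp \<mu> = {x. \<mu> x \<noteq> 0}"

definition is_signed_dist :: "sdist \<Rightarrow> bool" where
  "is_signed_dist \<mu> \<longleftrightarrow> finite (supp \<mu>)"

definition is_dist :: "sdist \<Rightarrow> bool" where
  "is_dist \<mu> \<longleftrightarrow> finite (supp \<mu>) \<and> (\<forall>x. \<mu> x \<ge> 0)"

definition mom :: "nat \<Rightarrow> sdist \<Rightarrow> real" where
  "mom j \<mu> = (\<Sum>x\<in>supp \<mu>. \<mu> x * x ^ j)"

type_synonym move = "real \<times> real \<times> sdist"

definition is_move :: "move \<Rightarrow> bool" where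
  "is_move v \<longleftrightarrow> (case v of (a, b, \<delta>) \<Rightarrow>
     a \<le> b \<and> is_signed_dist \<delta> \<and> supp \<delta> \<subseteq> {a..b} \<and>
     mom 0 \<delta> = 0 \<and> mom 1 \<delta> = 0)"

definition apply_move :: "move \<Rightarrow> sdist \<Rightarrow> sdist" where
  "apply_move v \<mu> = (case v of (a, b, \<delta>) \<Rightarrow> (\<lambda>x. \<mu> x + \<delta> x))"

definition move_applies :: "move \<Rightarrow> sdist \<Rightarrow> bool" where
  "move_applies v \<mu> \<longleftrightarrow> is_dist (apply_move v \<mu>)"

fun applies_seq :: "move list \<Rightarrow> sdist \<Rightarrow> bool" where
  "applies_seq [] \<mu> = True"
| "applies_seq (v # vs) \<mu> = (move_applies v \<mu> \<and> applies_seq vs (apply_move v \<mu>))"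

fun apply_seq :: "move list \<Rightarrow> sdist \<Rightarrow> sdist" where
  "apply_seq [] \<mu> = \<mu>"
| "apply_seq (v # vs) \<mu> = apply_seq vs (apply_move v \<mu>)"

definition extreme_move :: "real \<Rightarrow> real \<Rightarrow> sdist \<Rightarrow> sdist" where
  "extreme_move a b \<mu> = (THE \<mu>'. is_dist \<mu>' \<and>
      (\<forall>x. a < x \<and> x < b \<longrightarrow> \<mu>' x = 0) \<and>
      (\<forall>x. x \<notin> {a..b} \<longrightarrow> \<mu>' x = \<mu> x) \<and>
      mom 0 \<mu>' = mom 0 \<mu> \<and> mom 1 \<mu>' = mom 1 \<mu>)"

fun extreme_seq :: "move list \<Rightarrow> sdist \<Rightarrow> sdist" where
  "extreme_seq [] \<mu> = \<mu>"
| "extreme_seq ((a, b, \<delta>) # vs) \<mu> = extreme_seq vs (extreme_move a b \<mu>)"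

definition basic_split :: "sdist \<Rightarrow> sdist \<Rightarrow> bool" where
  "basic_split \<mu> \<mu>' \<longleftrightarrow> (\<exists>x \<nu>. \<mu> x > 0 \<and> is_dist \<nu> \<and>
      mom 0 \<nu> = \<mu> x \<and> mom 1 \<nu> = \<mu> x * x \<and>
      \<mu>' = (\<lambda>y. (if y = x then 0 else \<mu> y) + \<nu> y))"

definition split_le :: "sdist \<Rightarrow> sdist \<Rightarrow> bool" (infix "\<preceq>\<^sub>s" 50) where
  "\<mu> \<preceq>\<^sub>s \<mu>' \<longleftrightarrow> basic_split\<^sup>*\<^sup>* \<mu> \<mu>'"

end

theory Submission
  imports Defs
begin

definition pm :: "real \<Rightarrow> real \<Rightarrow> sdist" where
  "pm x c = (\<lambda>z. if z = x then c else 0)"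

lemma dist_signed: "is_dist f \<Longrightarrow> is_signed_dist f"
  by (simp add: is_dist_def is_signed_dist_def)

lemma signed_add: "is_signed_dist f \<Longrightarrow> is_signed_dist g \<Longrightarrow> is_signed_dist (\<lambda>z. f z + g z)"
  unfolding is_signed_dist_def
  by (rule finite_subset[of _ "supp f \<union> supp g"]) (auto simp: supp_def)

lemma signed_diff: "is_signed_dist f \<Longrightarrow> is_signed_dist g \<Longrightarrow> is_signed_dist (\<lambda>z. f z - g z)"
  unfolding is_signed_dist_def
  by (rule finite_subset[of _ "supp f \<union> supp g"]) (auto simp: supp_def)

lemma signed_scale: "is_signed_dist f \<Longrightarrow> is_signed_dist (\<lambda>z. c * f z)"
  unfolding is_signed_dist_def
  by (rule finite_subset[of _ "supp f"]) (auto simp: supp_def)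

lemma signed_restrict: "is_signed_dist f \<Longrightarrow> is_signed_dist (\<lambda>z. if P z then f z else 0)"
  unfolding is_signed_dist_def
  by (rule finite_subset[of _ "supp f"]) (auto simp: supp_def)

lemma signed_pm: "is_signed_dist (pm x c)"
  unfolding is_signed_dist_def
  by (rule finite_subset[of _ "{x}"]) (auto simp: supp_def pm_def)

lemma signed_zero: "is_signed_dist (\<lambda>z. 0)"
  unfolding is_signed_dist_def supp_def by simp

lemma mom_eq: "finite S \<Longrightarrow> supp f \<subseteq> S \<Longrightarrow> mom j f = (\<Sum>z\<in>S. f z * z ^ j)"
  unfolding mom_def by (rule sum.mono_neutral_left) (auto simp: supp_def)

lemma mom_add: assumes "is_signed_dist f" "is_signed_dist g"
  shows "mom j (\<lambda>z. f z + g z) = mom j f + mom j g"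
proof -
  let ?S = "supp f \<union> supp g"
  have fin: "finite ?S" using assms by (simp add: is_signed_dist_def)
  have "mom j (\<lambda>z. f z + g z) = (\<Sum>z\<in>?S. (f z + g z) * z ^ j)"
    by (rule mom_eq[OF fin]) (auto simp: supp_def)
  also have "\<dots> = (\<Sum>z\<in>?S. f z * z ^ j) + (\<Sum>z\<in>?S. g z * z ^ j)"
    by (simp add: distrib_right sum.distrib)
  also have "\<dots> = mom j f + mom j g"
    using mom_eq[OF fin, of f j] mom_eq[OF fin, of g j] by auto
  finally show ?thesis .
qed

lemma mom_diff: assumes "is_signed_dist f" "is_signed_dist g"
  shows "mom j (\<lambda>z. f z - g z) = mom j f - mom j g"
proof -
  let ?S = "supp f \<union> supp g"
  have fin: "finite ?S" using assms by (simp add: is_signed_dist_def)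
  have "mom j (\<lambda>z. f z - g z) = (\<Sum>z\<in>?S. (f z - g z) * z ^ j)"
    by (rule mom_eq[OF fin]) (auto simp: supp_def)
  also have "\<dots> = (\<Sum>z\<in>?S. f z * z ^ j) - (\<Sum>z\<in>?S. g z * z ^ j)"
    by (simp add: left_diff_distrib sum_subtractf)
  also have "\<dots> = mom j f - mom j g"
    using mom_eq[OF fin, of f j] mom_eq[OF fin, of g j] by auto
  finally show ?thesis .
qed

lemma mom_scale: assumes "is_signed_dist f"
  shows "mom j (\<lambda>z. c * f z) = c * mom j f"
proof -
  have fin: "finite (supp f)" using assms by (simp add: is_signed_dist_def)
  have "mom j (\<lambda>z. c * f z) = (\<Sum>z\<in>supp f. (c * f z) * z ^ j)"
    by (rule mom_eq[OF fin]) (auto simp: supp_def)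
  also have "\<dots> = c * mom j f" unfolding mom_def by (simp add: sum_distrib_left mult.assoc)
  finally show ?thesis .
qed

lemma mom_pm: "mom j (pm x c) = c * x ^ j"
  by (subst mom_eq[of "{x}"]) (auto simp: supp_def pm_def)

lemma mom_zero: "mom j (\<lambda>z. 0) = 0"
  by (simp add: mom_def supp_def)

lemma dist_zero_if_mom0: assumes "is_dist f" "mom 0 f = 0" shows "f = (\<lambda>z. 0)"
proof -
  have fin: "finite (supp f)" and nn: "\<And>z. f z \<ge> 0" using assms by (auto simp: is_dist_def)
  have "(\<Sum>z\<in>supp f. f z) = 0" using assms(2) by (simp add: mom_def)
  then have "\<forall>z\<in>supp f. f z = 0" using sum_nonneg_eq_0_iff[OF fin] nn by blast
  then show ?thesis by (auto simp: supp_def)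
qed

lemma mom1_ge: assumes "is_dist f" "\<And>z. f z \<noteq> 0 \<Longrightarrow> z \<ge> a"
  shows "a * mom 0 f \<le> mom 1 f"
proof -
  have "a * mom 0 f = (\<Sum>z\<in>supp f. f z * a)" by (simp add: mom_def sum_distrib_left mult.commute)
  also have "\<dots> \<le> (\<Sum>z\<in>supp f. f z * z)"
    using assms by (intro sum_mono mult_left_mono) (auto simp: supp_def is_dist_def)
  finally show ?thesis by (simp add: mom_def)
qed

lemma mom1_le: assumes "is_dist f" "\<And>z. f z \<noteq> 0 \<Longrightarrow> z \<le> b"
  shows "mom 1 f \<le> b * mom 0 f"
proof -
  have "(\<Sum>z\<in>supp f. f z * z) \<le> (\<Sum>z\<in>supp f. f z * b)"
    using assms by (intro sum_mono mult_left_mono) (auto simp: supp_def is_dist_def)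
  also have "\<dots> = b * mom 0 f" by (simp add: mom_def sum_distrib_left mult.commute)
  finally show ?thesis by (simp add: mom_def)
qed


definition inn :: "real \<Rightarrow> real \<Rightarrow> sdist \<Rightarrow> sdist" where
  "inn a b \<mu> = (\<lambda>z. if a < z \<and> z < b then \<mu> z else 0)"
definition outp :: "real \<Rightarrow> real \<Rightarrow> sdist \<Rightarrow> sdist" where
  "outp a b \<mu> = (\<lambda>z. if a < z \<and> z < b then 0 else \<mu> z)"
definition pA :: "real \<Rightarrow> real \<Rightarrow> sdist \<Rightarrow> real" where
  "pA a b \<mu> = (b * mom 0 (inn a b \<mu>) - mom 1 (inn a b \<mu>)) / (b - a)"
definition pB :: "real \<Rightarrow> real \<Rightarrow> sdist \<Rightarrow> real" where
  "pB a b \<mu> = (mom 1 (inn a b \<mu>) - a * mom 0 (inn a b \<mu>)) / (b - a)"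
definition E :: "real \<Rightarrow> real \<Rightarrow> sdist \<Rightarrow> sdist" where
  "E a b \<mu> = (\<lambda>z. outp a b \<mu> z + pm a (pA a b \<mu>) z + pm b (pB a b \<mu>) z)"

lemma inn_signed: "is_signed_dist \<mu> \<Longrightarrow> is_signed_dist (inn a b \<mu>)"
  unfolding inn_def by (rule signed_restrict)
lemma outp_signed: "is_signed_dist \<mu> \<Longrightarrow> is_signed_dist (outp a b \<mu>)"
  unfolding is_signed_dist_def
  by (rule finite_subset[of _ "supp \<mu>"]) (auto simp: supp_def outp_def)

lemma E_signed: "is_signed_dist \<mu> \<Longrightarrow> is_signed_dist (E a b \<mu>)"
  unfolding E_def by (intro signed_add outp_signed signed_pm)

lemma split_inn_outp: "\<mu> = (\<lambda>z. outp a b \<mu> z + inn a b \<mu> z)"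
  by (auto simp: outp_def inn_def)

lemma inn_empty: "\<not> a < b \<Longrightarrow> inn a b \<mu> = (\<lambda>z. 0)"
  by (auto simp: inn_def)

lemma E_mom: assumes "is_signed_dist \<mu>" "a \<le> b" "j \<le> 1"
  shows "mom j (E a b \<mu>) = mom j \<mu>"
proof -
  have s1: "is_signed_dist (outp a b \<mu>)" "is_signed_dist (inn a b \<mu>)"
    using assms by (auto intro: outp_signed inn_signed)
  have "mom j (E a b \<mu>) = mom j (outp a b \<mu>) + pA a b \<mu> * a ^ j + pB a b \<mu> * b ^ j"
    unfolding E_def
    by (simp add: mom_add signed_add s1 signed_pm mom_pm)
  moreover have "mom j \<mu> = mom j (outp a b \<mu>) + mom j (inn a b \<mu>)"
    by (subst split_inn_outp[of \<mu> a b]) (simp add: mom_add s1)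
  moreover have "pA a b \<mu> * a ^ j + pB a b \<mu> * b ^ j = mom j (inn a b \<mu>)"
  proof (cases "a < b")
    case True
    define M0 where "M0 = mom 0 (inn a b \<mu>)"
    define M1 where "M1 = mom 1 (inn a b \<mu>)"
    have ne: "b - a \<noteq> 0" using True by simp
    have e: "pA a b \<mu> * a ^ j + pB a b \<mu> * b ^ j = ((b * M0 - M1) * a ^ j + (M1 - a * M0) * b ^ j) / (b - a)"
      unfolding pA_def pB_def M0_def M1_def by (simp add: add_divide_distrib)
    show ?thesis
    proof (cases j)
      case 0
      then have "(b * M0 - M1) * a ^ j + (M1 - a * M0) * b ^ j = M0 * (b - a)" by (simp add: algebra_simps)
      then show ?thesis using e ne 0 M0_def by simp
    next
      case (Suc k)
      then have j1: "j = 1" using assms(3) by simp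
      then have "(b * M0 - M1) * a ^ j + (M1 - a * M0) * b ^ j = M1 * (b - a)" by (simp add: algebra_simps)
      then show ?thesis using e ne j1 M1_def by simp
    qed
  next
    case False
    then show ?thesis by (simp add: pA_def pB_def inn_empty mom_zero)
  qed
  ultimately show ?thesis by simp
qed

lemma E_dist: assumes "is_dist \<mu>" "a \<le> b" shows "is_dist (E a b \<mu>)"
proof -
  have d: "is_dist (inn a b \<mu>)" using assms
    unfolding is_dist_def using inn_signed[of \<mu> a b]
    by (auto simp: is_signed_dist_def inn_def)
  have "mom 1 (inn a b \<mu>) \<le> b * mom 0 (inn a b \<mu>)"
    by (rule mom1_le[OF d]) (auto simp: inn_def split: if_splits)
  moreover have "a * mom 0 (inn a b \<mu>) \<le> mom 1 (inn a b \<mu>)"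
    by (rule mom1_ge[OF d]) (auto simp: inn_def split: if_splits)
  ultimately have "pA a b \<mu> \<ge> 0" "pB a b \<mu> \<ge> 0" using assms(2)
    by (auto simp: pA_def pB_def)
  moreover have "E a b \<mu> z \<ge> 0" for z using calculation assms(1)
    by (simp add: E_def outp_def pm_def is_dist_def)
  ultimately show ?thesis using E_signed[OF dist_signed[OF assms(1)], of a b]
    by (auto simp: is_dist_def is_signed_dist_def)
qed

lemma E_add: assumes "is_signed_dist f" "is_signed_dist g"
  shows "E a b (\<lambda>z. f z + g z) = (\<lambda>z. E a b f z + E a b g z)"
proof -
  have i: "inn a b (\<lambda>z. f z + g z) = (\<lambda>z. inn a b f z + inn a b g z)"
    by (auto simp: inn_def)
  have m: "mom j (inn a b (\<lambda>z. f z + g z)) = mom j (inn a b f) + mom j (inn a b g)" for j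
    unfolding i by (rule mom_add; rule inn_signed; fact)
  have "pA a b (\<lambda>z. f z + g z) = pA a b f + pA a b g"
    unfolding pA_def m by (subst add_divide_distrib[symmetric]) (simp add: algebra_simps)
  moreover have "pB a b (\<lambda>z. f z + g z) = pB a b f + pB a b g"
    unfolding pB_def m by (subst add_divide_distrib[symmetric]) (simp add: algebra_simps)
  ultimately show ?thesis
    by (auto simp: E_def outp_def pm_def)
qed

lemma E_id: assumes "\<And>z. a < z \<Longrightarrow> z < b \<Longrightarrow> \<mu> z = 0" shows "E a b \<mu> = \<mu>"
proof -
  have "inn a b \<mu> = (\<lambda>z. 0)" using assms by (auto simp: inn_def)
  then show ?thesis using assms by (auto simp: E_def outp_def pA_def pB_def mom_zero pm_def)
qed

lemma E_pm_out: "\<not> (a < x \<and> x < b) \<Longrightarrow> E a b (pm x c) = pm x c"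
  by (rule E_id) (auto simp: pm_def)

lemma E_pm_in: assumes "a < x" "x < b"
  shows "E a b (pm x c) = (\<lambda>z. pm a (c * (b - x) / (b - a)) z + pm b (c * (x - a) / (b - a)) z)"
proof -
  have "inn a b (pm x c) = pm x c" using assms by (auto simp: inn_def pm_def)
  moreover have "outp a b (pm x c) = (\<lambda>z. 0)" using assms by (auto simp: outp_def pm_def)
  ultimately show ?thesis
    by (simp add: E_def pA_def pB_def mom_pm algebra_simps)
qed

lemma E_zero_in: "a < z \<Longrightarrow> z < b \<Longrightarrow> E a b \<mu> z = 0"
  by (auto simp: E_def outp_def pm_def)

lemma E_outside: "a \<le> b \<Longrightarrow> z \<notin> {a..b} \<Longrightarrow> E a b \<mu> z = \<mu> z"
  by (auto simp: E_def outp_def pm_def)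

definition spec :: "real \<Rightarrow> real \<Rightarrow> sdist \<Rightarrow> sdist \<Rightarrow> bool" where
  "spec a b \<mu> \<mu>' \<longleftrightarrow> is_dist \<mu>' \<and>
      (\<forall>x. a < x \<and> x < b \<longrightarrow> \<mu>' x = 0) \<and>
      (\<forall>x. x \<notin> {a..b} \<longrightarrow> \<mu>' x = \<mu> x) \<and>
      mom 0 \<mu>' = mom 0 \<mu> \<and> mom 1 \<mu>' = mom 1 \<mu>"

lemma extreme_spec: "extreme_move a b \<mu> = (THE \<mu>'. spec a b \<mu> \<mu>')"
  unfolding extreme_move_def spec_def ..

lemma spec_E: "is_dist \<mu> \<Longrightarrow> a \<le> b \<Longrightarrow> spec a b \<mu> (E a b \<mu>)"
  unfolding spec_def using E_dist[of \<mu> a b] E_zero_in[of a _ b \<mu>] E_outside[of a b _ \<mu>]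
    E_mom[of \<mu> a b 0] E_mom[of \<mu> a b 1] dist_signed[of \<mu>] by auto

lemma spec_unique: assumes "spec a b \<mu> \<mu>1" "spec a b \<mu> \<mu>2" "a \<le> b"
  shows "\<mu>1 = \<mu>2"
proof -
  define d where "d = (\<lambda>z. \<mu>1 z - \<mu>2 z)"
  have s: "is_signed_dist \<mu>1" "is_signed_dist \<mu>2" using assms by (auto simp: spec_def dist_signed)
  have z: "d z = 0" if "z \<noteq> a" "z \<noteq> b" for z
  proof (cases "z \<in> {a..b}")
    case True then have "a < z" "z < b" using that by auto
    then show ?thesis using assms by (auto simp: spec_def d_def)
  next
    case False then show ?thesis using assms by (auto simp: spec_def d_def)
  qed
  have m: "mom j d = 0" if "j \<le> 1" for j
  proof -
    have "mom j d = mom j \<mu>1 - mom j \<mu>2" unfolding d_def by (rule mom_diff[OF s])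
    then show ?thesis using assms that by (cases j) (auto simp: spec_def)
  qed
  have sd: "supp d \<subseteq> {a, b}" using z by (auto simp: supp_def)
  have fin: "finite {a, b}" by simp
  have "d a = 0 \<and> d b = 0"
  proof (cases "a = b")
    case True
    then have "mom 0 d = d a" using mom_eq[OF fin sd, of 0] by simp
    then show ?thesis using m[of 0] True by simp
  next
    case False
    have "mom j d = d a * a ^ j + d b * b ^ j" for j using mom_eq[OF fin sd, of j] False by simp
    then have e: "d a + d b = 0" "d a * a + d b * b = 0"
      using m[of 0] m[of 1] by auto
    have "d b * (b - a) = (d a * a + d b * b) - a * (d a + d b)" by (simp add: algebra_simps)
    then have "d b * (b - a) = 0" using e by simp
    then show ?thesis using False e by auto
  qed
  then have "\<forall>z. d z = 0" using z by metis
  then show ?thesis by (auto simp: d_def)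
qed

lemma extreme_E: assumes "is_dist \<mu>" "a \<le> b" shows "extreme_move a b \<mu> = E a b \<mu>"
  unfolding extreme_spec
  by (rule the_equality) (auto intro: spec_E[OF assms] spec_unique[OF _ spec_E[OF assms] assms(2)])


lemma dist_pm: "c \<ge> 0 \<Longrightarrow> is_dist (pm x c)"
  using signed_pm[of x c] by (auto simp: is_dist_def is_signed_dist_def pm_def)

lemma dist_add: "is_dist f \<Longrightarrow> is_dist g \<Longrightarrow> is_dist (\<lambda>z. f z + g z)"
  using signed_add[of f g] by (auto simp: is_dist_def is_signed_dist_def)

lemma dist_restrict: "is_dist f \<Longrightarrow> is_dist (\<lambda>z. if P z then f z else 0)"
  using signed_restrict[of f P] by (auto simp: is_dist_def is_signed_dist_def)

lemma split_S:
  assumes "is_dist \<rho>" "is_dist K" "c \<ge> 0" "mom 0 K = c" "mom 1 K = c * x"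
    "\<mu>1 = (\<lambda>z. \<rho> z + pm x c z)" "\<mu>2 = (\<lambda>z. \<rho> z + K z)"
  shows "\<mu>1 \<preceq>\<^sub>s \<mu>2"
proof (cases "c = 0")
  case True
  then have "K = (\<lambda>z. 0)" using dist_zero_if_mom0 assms by simp
  then have "\<mu>1 = \<mu>2" using assms True by (auto simp: pm_def)
  then show ?thesis by (simp add: split_le_def)
next
  case False
  then have cpos: "c > 0" using assms by simp
  have r0: "\<rho> x \<ge> 0" using assms by (simp add: is_dist_def)
  define \<nu> where "\<nu> = (\<lambda>z. pm x (\<rho> x) z + K z)"
  have "basic_split \<mu>1 \<mu>2"
    unfolding basic_split_def
  proof (intro exI conjI)
    show "\<mu>1 x > 0" using assms cpos r0 by (simp add: pm_def)
    show "is_dist \<nu>" unfolding \<nu>_def by (intro dist_add dist_pm r0 assms)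
    have mn: "mom j \<nu> = \<rho> x * x ^ j + mom j K" for j unfolding \<nu>_def using assms
      by (simp add: mom_add signed_pm dist_signed mom_pm)
    have m1: "\<mu>1 x = \<rho> x + c" using assms by (simp add: pm_def)
    show "mom 0 \<nu> = \<mu>1 x" using mn[of 0] m1 assms by simp
    show "mom 1 \<nu> = \<mu>1 x * x" using mn[of 1] m1 assms by (simp add: algebra_simps)
    show "\<mu>2 = (\<lambda>y. (if y = x then 0 else \<mu>1 y) + \<nu> y)"
      using assms by (auto simp: \<nu>_def pm_def)
  qed
  then show ?thesis by (simp add: split_le_def)
qed

lemma split_dist1: assumes "basic_split \<mu> \<nu>" "is_dist \<mu>" shows "is_dist \<nu>"
proof -
  obtain x K where K: "is_dist K" "\<nu> = (\<lambda>y. (if y = x then 0 else \<mu> y) + K y)"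
    using assms(1) unfolding basic_split_def by blast
  have "is_dist (\<lambda>y. if y \<noteq> x then \<mu> y else 0)" by (rule dist_restrict[OF assms(2)])
  then have "is_dist (\<lambda>z. (if z \<noteq> x then \<mu> z else 0) + K z)" using K by (intro dist_add)
  moreover have "\<nu> = (\<lambda>z. (if z \<noteq> x then \<mu> z else 0) + K z)" using K by auto
  ultimately show ?thesis by simp
qed

lemma splits_dist: "\<mu> \<preceq>\<^sub>s \<nu> \<Longrightarrow> is_dist \<mu> \<Longrightarrow> is_dist \<nu>"
  unfolding split_le_def
  by (induction rule: rtranclp_induct) (auto intro: split_dist1)

lemma split_trans: "\<mu> \<preceq>\<^sub>s \<nu> \<Longrightarrow> \<nu> \<preceq>\<^sub>s \<xi> \<Longrightarrow> \<mu> \<preceq>\<^sub>s \<xi>"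
  unfolding split_le_def by (rule rtranclp_trans)


lemma le_E: assumes "a \<le> b" shows "is_dist \<mu> \<Longrightarrow> \<mu> \<preceq>\<^sub>s E a b \<mu>"
proof (induction "card (supp \<mu> \<inter> {a<..<b})" arbitrary: \<mu>)
  case 0
  have "finite (supp \<mu> \<inter> {a<..<b})" using 0 by (simp add: is_dist_def)
  then have "supp \<mu> \<inter> {a<..<b} = {}" using 0 by simp
  then have "\<And>z. a < z \<Longrightarrow> z < b \<Longrightarrow> \<mu> z = 0" by (auto simp: supp_def)
  then have "E a b \<mu> = \<mu>" by (rule E_id)
  then show ?case by (simp add: split_le_def)
next
  case (Suc n)
  have fin: "finite (supp \<mu> \<inter> {a<..<b})" using Suc by (simp add: is_dist_def)
  obtain y where y: "y \<in> supp \<mu> \<inter> {a<..<b}" using Suc(2) by (metis card.empty ex_in_conv nat.simps(3))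
  define c where "c = \<mu> y"
  have ay: "a < y" "y < b" using y by auto
  have cpos: "c > 0" using y Suc(3) by (auto simp: c_def supp_def is_dist_def order_le_less)
  define \<rho> where "\<rho> = (\<lambda>z. if z \<noteq> y then \<mu> z else 0)"
  have rd: "is_dist \<rho>" unfolding \<rho>_def by (rule dist_restrict[OF Suc(3)])
  define p where "p = c * (b - y) / (b - a)"
  define q where "q = c * (y - a) / (b - a)"
  have ab: "b - a > 0" using ay by simp
  have pq: "p \<ge> 0" "q \<ge> 0" using ay cpos ab by (auto simp: p_def q_def)
  define K where "K = (\<lambda>z. pm a p z + pm b q z)"
  have Kd: "is_dist K" unfolding K_def by (intro dist_add dist_pm pq)
  have mK: "mom j K = p * a ^ j + q * b ^ j" for j
    unfolding K_def by (simp add: mom_add signed_pm mom_pm)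
  have "p + q = (c * (b - y) + c * (y - a)) / (b - a)" by (simp add: p_def q_def add_divide_distrib)
  also have "c * (b - y) + c * (y - a) = c * (b - a)" by (simp add: algebra_simps)
  finally have "p + q = c" using ab by simp
  then have mK0: "mom 0 K = c" using mK[of 0] by simp
  have "p * a + q * b = (c * (b - y) * a + c * (y - a) * b) / (b - a)" by (simp add: p_def q_def add_divide_distrib)
  also have "c * (b - y) * a + c * (y - a) * b = c * y * (b - a)" by (simp add: algebra_simps)
  finally have "p * a + q * b = c * y" using ab by simp
  then have mK1: "mom 1 K = c * y" using mK[of 1] by simp
  define \<mu>1 where "\<mu>1 = (\<lambda>z. \<rho> z + K z)"
  have eq\<mu>: "\<mu> = (\<lambda>z. \<rho> z + pm y c z)" by (auto simp: \<rho>_def pm_def c_def)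
  have s1: "\<mu> \<preceq>\<^sub>s \<mu>1"
    by (rule split_S[OF rd Kd less_imp_le[OF cpos] mK0 mK1 eq\<mu> \<mu>1_def])
  have d1: "is_dist \<mu>1" unfolding \<mu>1_def by (intro dist_add rd Kd)
  have Kin: "K z = 0" if "a < z" "z < b" for z using that by (auto simp: K_def pm_def)
  have "supp \<mu>1 \<inter> {a<..<b} = supp \<mu> \<inter> {a<..<b} - {y}"
    using Kin by (auto simp: supp_def \<mu>1_def \<rho>_def)
  then have "n = card (supp \<mu>1 \<inter> {a<..<b})" using Suc(2) fin y by simp
  then have s2: "\<mu>1 \<preceq>\<^sub>s E a b \<mu>1" using Suc(1) d1 by blast
  have "E a b \<mu>1 = (\<lambda>z. E a b \<rho> z + E a b K z)"
    unfolding \<mu>1_def by (rule E_add[OF dist_signed[OF rd] dist_signed[OF Kd]])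
  also have "E a b K = K" using Kin by (rule E_id)
  also have "K = E a b (pm y c)" using E_pm_in[OF ay, of c] by (simp add: K_def p_def q_def)
  also have "(\<lambda>z. E a b \<rho> z + E a b (pm y c) z) = E a b \<mu>"
    by (subst eq\<mu>, rule E_add[symmetric, OF dist_signed[OF rd] signed_pm])
  finally show ?case using s1 s2 split_trans by metis
qed


lemma kernel:
  assumes td: "is_dist \<tau>" and tz: "\<And>z. a < z \<Longrightarrow> z < b \<Longrightarrow> \<tau> z = 0"
    and ax: "a < x" "x < b" and cpos: "c > 0" and m0: "mom 0 \<tau> = c" and m1: "mom 1 \<tau> = c * x"
  shows "\<exists>Ka Kb. is_dist Ka \<and> is_dist Kb \<and> \<tau> = (\<lambda>z. Ka z + Kb z) \<and>
     mom 0 Ka = c * (b - x) / (b - a) \<and> mom 1 Ka = c * (b - x) / (b - a) * a \<and>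
     mom 0 Kb = c * (x - a) / (b - a) \<and> mom 1 Kb = c * (x - a) / (b - a) * b"
proof -
  define d where "d = b - a"
  have dpos: "d > 0" using ax by (simp add: d_def)
  define tL where "tL = (\<lambda>z. if z \<le> a then \<tau> z else 0)"
  define tR where "tR = (\<lambda>z. if \<not> z \<le> a then \<tau> z else 0)"
  have dL: "is_dist tL" unfolding tL_def by (rule dist_restrict[OF td])
  have dR: "is_dist tR" unfolding tR_def by (rule dist_restrict[OF td])
  have tsplit: "\<tau> = (\<lambda>z. tL z + tR z)" by (auto simp: tL_def tR_def)
  define P0 where "P0 = mom 0 tL"
  define P1 where "P1 = mom 1 tL"
  define Q0 where "Q0 = mom 0 tR"
  define Q1 where "Q1 = mom 1 tR"
  have mt: "mom j \<tau> = mom j tL + mom j tR" for j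
    by (subst tsplit) (simp add: mom_add dist_signed dL dR)
  have e0: "P0 + Q0 = c" using mt[of 0] m0 by (simp add: P0_def Q0_def)
  have e1: "P1 + Q1 = c * x" using mt[of 1] m1 by (simp add: P1_def Q1_def)
  have hL: "P1 \<le> a * P0" unfolding P0_def P1_def
    by (rule mom1_le[OF dL]) (auto simp: tL_def split: if_splits)
  have hR: "b * Q0 \<le> Q1" unfolding Q0_def Q1_def
  proof (rule mom1_ge[OF dR])
    fix z assume "tR z \<noteq> 0"
    then have "a < z" "\<tau> z \<noteq> 0" by (auto simp: tR_def split: if_splits)
    then show "b \<le> z" using tz by force
  qed
  have Q0nn: "Q0 \<ge> 0" using dR unfolding Q0_def mom_def is_dist_def by (auto intro: sum_nonneg)
  have P0nn: "P0 \<ge> 0" using dL unfolding P0_def mom_def is_dist_def by (auto intro: sum_nonneg)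
  have P0pos: "P0 > 0"
  proof (rule ccontr)
    assume "\<not> P0 > 0"
    then have "P0 = 0" using P0nn by simp
    then have "tL = (\<lambda>z. 0)" using dist_zero_if_mom0[OF dL] by (simp add: P0_def)
    then have "P1 = 0" by (simp add: P1_def mom_zero)
    then have "Q0 = c" "Q1 = c * x" using e0 e1 \<open>P0 = 0\<close> by auto
    then have "b * c \<le> c * x" using hR by simp
    then have "b \<le> x" using cpos by (simp add: mult.commute)
    then show False using ax by simp
  qed
  define u where "u = a * P0 - P1"
  define w where "w = Q1 - a * Q0"
  have unn: "u \<ge> 0" using hL by (simp add: u_def)
  have wdq: "w \<ge> d * Q0" using hR by (simp add: w_def d_def algebra_simps)
  have "w - u = (P1 + Q1) - a * (P0 + Q0)" by (simp add: u_def w_def algebra_simps)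
  then have wu: "w - u = c * (x - a)" using e0 e1 by (simp add: algebra_simps)
  have "c * (x - a) > 0" using cpos ax by simp
  then have wgu: "w > u" using wu by simp
  define D where "D = P0 * w + Q0 * u"
  have wpos: "w > 0" using wgu unn by linarith
  have "P0 * w > 0" using P0pos wpos by (rule mult_pos_pos)
  moreover have "Q0 * u \<ge> 0" using Q0nn unn by (rule mult_nonneg_nonneg)
  ultimately have Dpos: "D > 0" unfolding D_def by linarith
  define p where "p = c * (b - x) / (b - a)"
  have dp: "d * p = d * (P0 + Q0) + u - w"
  proof -
    have "d * p = c * (b - x)" using dpos by (simp add: p_def d_def)
    also have "\<dots> = b * c - c * x" by (simp add: algebra_simps)
    also have "\<dots> = b * (P0 + Q0) - (P1 + Q1)" using e0 e1 by simp
    also have "\<dots> = d * (P0 + Q0) + u - w"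
      by (simp add: u_def w_def d_def algebra_simps)
    finally show ?thesis .
  qed
  have k1: "d * (D - p * w) = (w - d * Q0) * (w - u)"
  proof -
    have "d * (D - p * w) = d * D - (d * p) * w" by (simp add: algebra_simps)
    also have "\<dots> = (w - d * Q0) * (w - u)" unfolding dp D_def by (simp add: algebra_simps)
    finally show ?thesis .
  qed
  have k2: "d * (D - p * u) = (w - u) * (d * P0 + u)"
  proof -
    have "d * (D - p * u) = d * D - (d * p) * u" by (simp add: algebra_simps)
    also have "\<dots> = (w - u) * (d * P0 + u)" unfolding dp D_def by (simp add: algebra_simps)
    finally show ?thesis .
  qed
  have "(w - d * Q0) * (w - u) \<ge> 0" using wdq wgu by simp
  then have "0 \<le> d * (D - p * w)" using k1 by simp
  then have "0 \<le> D - p * w" using dpos by (simp add: zero_le_mult_iff)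
  then have pwD: "p * w \<le> D" by simp
  have "(w - u) * (d * P0 + u) \<ge> 0" using wgu dpos P0nn unn by simp
  then have "0 \<le> d * (D - p * u)" using k2 by simp
  then have "0 \<le> D - p * u" using dpos by (simp add: zero_le_mult_iff)
  then have puD: "p * u \<le> D" by simp
  define t where "t = p / D"
  have pnn: "p \<ge> 0" using cpos ax by (simp add: p_def)
  have tnn: "t \<ge> 0" using pnn Dpos by (simp add: t_def)
  have tw: "t * w \<le> 1" using pwD Dpos by (simp add: t_def field_simps)
  have tu: "t * u \<le> 1" using puD Dpos by (simp add: t_def field_simps)
  define Ka where "Ka = (\<lambda>z. t * (w * tL z + u * tR z))"
  define Kb where "Kb = (\<lambda>z. \<tau> z - Ka z)"
  have sKa: "is_signed_dist Ka" unfolding Ka_def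
    by (intro signed_scale signed_add dist_signed dL dR)
  have Ka_val: "Ka z = (if z \<le> a then t * w * \<tau> z else t * u * \<tau> z)" for z
    by (simp add: Ka_def tL_def tR_def)
  have tn: "\<tau> z \<ge> 0" for z using td by (simp add: is_dist_def)
  have dKa: "is_dist Ka" using sKa Ka_val tn tnn unn wgu
    by (auto simp: is_dist_def is_signed_dist_def)
  have Kb_val: "Kb z = (if z \<le> a then (1 - t * w) * \<tau> z else (1 - t * u) * \<tau> z)" for z
    by (simp add: Kb_def Ka_val algebra_simps)
  have dKb: "is_dist Kb" using signed_diff[OF dist_signed[OF td] sKa] Kb_val tn tw tu
    unfolding Kb_def[symmetric] by (auto simp: is_dist_def is_signed_dist_def)
  have mKa: "mom j Ka = t * (w * mom j tL + u * mom j tR)" for j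
  proof -
    have s1: "is_signed_dist (\<lambda>z. w * tL z)" "is_signed_dist (\<lambda>z. u * tR z)"
      by (intro signed_scale dist_signed dL dR)+
    have "mom j Ka = t * mom j (\<lambda>z. w * tL z + u * tR z)"
      unfolding Ka_def by (rule mom_scale, rule signed_add[OF s1])
    also have "mom j (\<lambda>z. w * tL z + u * tR z) = mom j (\<lambda>z. w * tL z) + mom j (\<lambda>z. u * tR z)"
      by (rule mom_add[OF s1])
    also have "\<dots> = w * mom j tL + u * mom j tR"
      using mom_scale[OF dist_signed[OF dL], of j w] mom_scale[OF dist_signed[OF dR], of j u] by simp
    finally show ?thesis .
  qed
  have tD: "t * D = p" using Dpos by (simp add: t_def)
  have "mom 0 Ka = t * D" using mKa[of 0]
    by (simp add: P0_def[symmetric] Q0_def[symmetric] D_def algebra_simps)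
  then have mKa0: "mom 0 Ka = p" using tD by simp
  have "w * P1 + u * Q1 = a * D" by (simp add: u_def w_def D_def algebra_simps)
  then have "w * mom 1 tL + u * mom 1 tR = a * D" unfolding P1_def Q1_def .
  then have "mom 1 Ka = t * (a * D)" using mKa[of 1] by metis
  then have mKa1: "mom 1 Ka = p * a" using tD by (simp add: algebra_simps)
  have mKb: "mom j Kb = mom j \<tau> - mom j Ka" for j
    unfolding Kb_def by (rule mom_diff[OF dist_signed[OF td] sKa])
  have ab: "b - a \<noteq> 0" using ax by simp
  have "c - p = c * (x - a) / (b - a)" using ab by (simp add: p_def field_simps)
  then have mKb0: "mom 0 Kb = c * (x - a) / (b - a)" using mKb[of 0] m0 mKa0 by simp
  have "c * x - p * a = c * (x - a) / (b - a) * b" using ab by (simp add: p_def field_simps)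
  then have mKb1: "mom 1 Kb = c * (x - a) / (b - a) * b" using mKb[of 1] m1 mKa1 by simp
  have "\<tau> = (\<lambda>z. Ka z + Kb z)" by (simp add: Kb_def)
  then show ?thesis using dKa dKb mKa0 mKa1 mKb0 mKb1 unfolding p_def by blast
qed


lemma mono_basic: assumes "basic_split \<mu> \<nu>" "is_dist \<mu>" "a \<le> b"
  shows "E a b \<mu> \<preceq>\<^sub>s E a b \<nu>"
proof -
  obtain x K where K: "\<mu> x > 0" "is_dist K" "mom 0 K = \<mu> x" "mom 1 K = \<mu> x * x"
    "\<nu> = (\<lambda>y. (if y = x then 0 else \<mu> y) + K y)"
    using assms(1) unfolding basic_split_def by blast
  define c where "c = \<mu> x"
  define \<rho> where "\<rho> = (\<lambda>z. if z \<noteq> x then \<mu> z else 0)"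
  have rd: "is_dist \<rho>" unfolding \<rho>_def by (rule dist_restrict[OF assms(2)])
  have eq\<mu>: "\<mu> = (\<lambda>z. \<rho> z + pm x c z)" by (auto simp: \<rho>_def pm_def c_def)
  have eq\<nu>: "\<nu> = (\<lambda>z. \<rho> z + K z)" using K(5) by (auto simp: \<rho>_def)
  have E\<mu>: "E a b \<mu> = (\<lambda>z. E a b \<rho> z + E a b (pm x c) z)"
    by (subst eq\<mu>, rule E_add[OF dist_signed[OF rd] signed_pm])
  have E\<nu>: "E a b \<nu> = (\<lambda>z. E a b \<rho> z + E a b K z)"
    by (subst eq\<nu>, rule E_add[OF dist_signed[OF rd] dist_signed[OF K(2)]])
  have dEr: "is_dist (E a b \<rho>)" by (rule E_dist[OF rd assms(3)])
  have dEK: "is_dist (E a b K)" by (rule E_dist[OF K(2) assms(3)])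
  have cpos: "c > 0" using K by (simp add: c_def)
  have mEK0: "mom 0 (E a b K) = c" using E_mom[OF dist_signed[OF K(2)] assms(3), of 0] K by (simp add: c_def)
  have mEK1: "mom 1 (E a b K) = c * x" using E_mom[OF dist_signed[OF K(2)] assms(3), of 1] K by (simp add: c_def)
  show ?thesis
  proof (cases "a < x \<and> x < b")
    case False
    then have "E a b (pm x c) = pm x c" by (rule E_pm_out)
    then show ?thesis
      using split_S[OF dEr dEK less_imp_le[OF cpos] mEK0 mEK1 _ E\<nu>] E\<mu> by simp
  next
    case True
    then have ax: "a < x" "x < b" by auto
    obtain Ka Kb where KK: "is_dist Ka" "is_dist Kb" "E a b K = (\<lambda>z. Ka z + Kb z)"
      "mom 0 Ka = c * (b - x) / (b - a)" "mom 1 Ka = c * (b - x) / (b - a) * a"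
      "mom 0 Kb = c * (x - a) / (b - a)" "mom 1 Kb = c * (x - a) / (b - a) * b"
      using kernel[OF dEK E_zero_in ax cpos mEK0 mEK1] by blast
    define p where "p = c * (b - x) / (b - a)"
    define q where "q = c * (x - a) / (b - a)"
    have pq: "p \<ge> 0" "q \<ge> 0" using ax cpos by (auto simp: p_def q_def)
    have Epm: "E a b (pm x c) = (\<lambda>z. pm a p z + pm b q z)"
      using E_pm_in[OF ax, of c] by (simp add: p_def q_def)
    have s1: "E a b \<mu> \<preceq>\<^sub>s (\<lambda>z. (E a b \<rho> z + pm b q z) + Ka z)"
    proof (rule split_S[OF dist_add[OF dEr dist_pm[OF pq(2)]] KK(1) pq(1)])
      show "mom 0 Ka = p" using KK by (simp add: p_def)
      show "mom 1 Ka = p * a" using KK by (simp add: p_def)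
      show "E a b \<mu> = (\<lambda>z. (E a b \<rho> z + pm b q z) + pm a p z)"
        unfolding E\<mu> Epm by (simp add: algebra_simps)
    qed simp
    have s2: "(\<lambda>z. (E a b \<rho> z + pm b q z) + Ka z) \<preceq>\<^sub>s E a b \<nu>"
    proof (rule split_S[OF dist_add[OF dEr KK(1)] KK(2) pq(2)])
      show "mom 0 Kb = q" using KK by (simp add: q_def)
      show "mom 1 Kb = q * b" using KK by (simp add: q_def)
      show "(\<lambda>z. (E a b \<rho> z + pm b q z) + Ka z) = (\<lambda>z. (E a b \<rho> z + Ka z) + pm b q z)"
        by (simp add: algebra_simps)
      show "E a b \<nu> = (\<lambda>z. (E a b \<rho> z + Ka z) + Kb z)"
        unfolding E\<nu> KK(3) by (simp add: algebra_simps)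
    qed
    show ?thesis using s1 s2 by (rule split_trans)
  qed
qed

lemma mono: assumes "\<mu> \<preceq>\<^sub>s \<nu>" "is_dist \<mu>" "a \<le> b"
  shows "E a b \<mu> \<preceq>\<^sub>s E a b \<nu>"
  using assms(1) unfolding split_le_def
proof (induction rule: rtranclp_induct)
  case base then show ?case by simp
next
  case (step y z)
  have "is_dist y" using step(1) assms(2) splits_dist unfolding split_le_def by blast
  then have "E a b y \<preceq>\<^sub>s E a b z" using mono_basic[OF step(2) _ assms(3)] by blast
  then show ?case using step(3) split_trans unfolding split_le_def by blast
qed

lemma ext_seq_mono: "\<forall>v\<in>set V. is_move v \<Longrightarrow> \<mu> \<preceq>\<^sub>s \<nu> \<Longrightarrow> is_dist \<mu> \<Longrightarrow>
   extreme_seq V \<mu> \<preceq>\<^sub>s extreme_seq V \<nu>"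
proof (induction V arbitrary: \<mu> \<nu>)
  case Nil then show ?case by simp
next
  case (Cons v V)
  obtain a b \<delta> where v: "v = (a, b, \<delta>)" by (cases v) auto
  have ab: "a \<le> b" using Cons(2) v by (simp add: is_move_def)
  have dn: "is_dist \<nu>" using splits_dist Cons by blast
  have "extreme_move a b \<mu> = E a b \<mu>" "extreme_move a b \<nu> = E a b \<nu>"
    using extreme_E ab Cons(4) dn by auto
  moreover have "E a b \<mu> \<preceq>\<^sub>s E a b \<nu>" by (rule mono[OF Cons(3) Cons(4) ab])
  moreover have "is_dist (E a b \<mu>)" by (rule E_dist[OF Cons(4) ab])
  ultimately show ?case using Cons(1) Cons(2) v by simp
qed

theorem mainTheorem11:
  fixes \<mu> :: sdist and V :: "move list"
  assumes "is_dist \<mu>"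
    and "\<forall>v\<in>set V. is_move v"
    and "applies_seq V \<mu>"
  shows "apply_seq V \<mu> \<preceq>\<^sub>s extreme_seq V \<mu>"
  using assms
proof (induction V arbitrary: \<mu>)
  case Nil then show ?case by (simp add: split_le_def)
next
  case (Cons v V)
  obtain a b \<delta> where v: "v = (a, b, \<delta>)" by (cases v) auto
  have mv: "a \<le> b" "is_signed_dist \<delta>" "supp \<delta> \<subseteq> {a..b}" "mom 0 \<delta> = 0" "mom 1 \<delta> = 0"
    using Cons(3) v by (auto simp: is_move_def)
  define \<mu>1 where "\<mu>1 = (\<lambda>x. \<mu> x + \<delta> x)"
  have am: "apply_move v \<mu> = \<mu>1" by (simp add: v apply_move_def \<mu>1_def)
  have d1: "is_dist \<mu>1" using Cons(4) am by (simp add: move_applies_def)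
  have ap: "applies_seq V \<mu>1" using Cons(4) am by simp
  have IH: "apply_seq V \<mu>1 \<preceq>\<^sub>s extreme_seq V \<mu>1"
    using Cons(1)[OF d1 _ ap] Cons(3) by simp
  have sp: "spec a b \<mu> (E a b \<mu>)" by (rule spec_E[OF Cons(2) mv(1)])
  have "mom j \<mu>1 = mom j \<mu>" if "j \<le> 1" for j
    using mom_add[OF dist_signed[OF Cons(2)] mv(2), of j] mv that unfolding \<mu>1_def
    by (cases j) auto
  moreover have "\<forall>x. x \<notin> {a..b} \<longrightarrow> \<mu>1 x = \<mu> x"
    using mv(3) by (auto simp: \<mu>1_def supp_def)
  ultimately have sp1: "spec a b \<mu>1 (E a b \<mu>)" using sp by (auto simp: spec_def)
  have "E a b \<mu>1 = E a b \<mu>" by (rule spec_unique[OF spec_E[OF d1 mv(1)] sp1 mv(1)])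
  then have ex: "extreme_move a b \<mu> = E a b \<mu>1" using extreme_E[OF Cons(2) mv(1)] by simp
  have "\<mu>1 \<preceq>\<^sub>s E a b \<mu>1" by (rule le_E[OF mv(1) d1])
  then have "extreme_seq V \<mu>1 \<preceq>\<^sub>s extreme_seq V (E a b \<mu>1)"
    using ext_seq_mono Cons(3) d1 by simp
  then show ?case using IH ex v am split_trans by simp
qed

end
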